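(* Let $A,A^*\in\mathrm{Mat}_{d+1}(\mathbb K)$ be as in the setup below. Then $A,A^*$ is a Leonard pair if and only if there exists an invertible $H\in\mathrm{Mat}_{d+1}(\mathbb K)$ such that $H^{-1}A^tH=A$ and $H^{-1}A^{*t}H=A^*$, where ${}^t$ denotes transpose.
   Context: Let $\mathbb K$ be a field and $d\ge0$ an integer; rows/columns are indexed $0,\ldots,d$. Let $\theta_0,\ldots,\theta_d\in\mathbb K$ be mutually distinct, $\theta^*_0,\ldots,\theta^*_d\in\mathbb K$ mutually distinct, and $\varphi_1,\ldots,\varphi_d\in\mathbb K$ nonzero. Let $A\in\mathrm{Mat}_{d+1}(\mathbb K)$ be lower bidiagonal with $A_{ii}=\theta_i$, $A_{i+1,i}=1$ and all other entries $0$; let $A^*$ be upper bidiagonal with $A^*_{ii}=\theta^*_i$, $A^*_{i-1,i}=\varphi_i$ and all other entries $0$ ($A^*$ is just a name, not an adjoint). A square matrix is tridiagonal if every nonzero entry lies on the diagonal, subdiagonal or superdiagonal, and irreducible tridiagonal if moreover all sub- and superdiagonal entries are nonzero. $A,A^*$ is a Leonard pair if there is a basis of $\mathbb K^{d+1}$ in which $A$ is represented by an irreducible tridiagonal matrix and $A^*$ by a diagonal one, and a basis in which $A^*$ is irreducible tridiagonal and $A$ diagonal. *)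

theory Defs
  imports "Jordan_Normal_Form.Matrix"
begin

definition A_mat :: "nat \<Rightarrow> (nat \<Rightarrow> 'a::field) \<Rightarrow> 'a mat" where
  "A_mat d th = mat (d+1) (d+1) (\<lambda>(i,j). if i = j then th i else if i = j + 1 then 1 else 0)"

definition Astar_mat :: "nat \<Rightarrow> (nat \<Rightarrow> 'a::field) \<Rightarrow> (nat \<Rightarrow> 'a) \<Rightarrow> 'a mat" where
  "Astar_mat d ths ph = mat (d+1) (d+1) (\<lambda>(i,j). if i = j then ths i else if j = i + 1 then ph j else 0)"

definition tridiagonal_mat :: "'a::zero mat \<Rightarrow> bool" where
  "tridiagonal_mat M \<longleftrightarrow> (\<forall>i < dim_row M. \<forall>j < dim_col M.
      M $$ (i,j) \<noteq> 0 \<longrightarrow> (i = j \<or> i = j + 1 \<or> j = i + 1))"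

definition irred_tridiagonal_mat :: "'a::zero mat \<Rightarrow> bool" where
  "irred_tridiagonal_mat M \<longleftrightarrow> tridiagonal_mat M \<and>
     (\<forall>i. i + 1 < dim_row M \<longrightarrow> i + 1 < dim_col M \<longrightarrow>
        M $$ (i+1,i) \<noteq> 0 \<and> M $$ (i,i+1) \<noteq> 0)"

text \<open>A basis of K^n is the columns of an invertible n x n matrix P with inverse Q;
  the matrix representing X in that basis is Q * X * P.\<close>
definition Leonard_pair :: "nat \<Rightarrow> 'a::field mat \<Rightarrow> 'a mat \<Rightarrow> bool" where
  "Leonard_pair n X Y \<longleftrightarrow>
    (\<exists>P \<in> carrier_mat n n. \<exists>Q \<in> carrier_mat n n. P * Q = 1\<^sub>m n \<and> Q * P = 1\<^sub>m n \<and>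
        irred_tridiagonal_mat (Q * X * P) \<and> diagonal_mat (Q * Y * P)) \<and>
    (\<exists>P \<in> carrier_mat n n. \<exists>Q \<in> carrier_mat n n. P * Q = 1\<^sub>m n \<and> Q * P = 1\<^sub>m n \<and>
        irred_tridiagonal_mat (Q * Y * P) \<and> diagonal_mat (Q * X * P))"

end

theory Submission imports Defs "Jordan_Normal_Form.Determinant" begin

lemma mult_entry:
  assumes "A \<in> carrier_mat n n" "B \<in> carrier_mat n n" "i < n" "j < n"
  shows "(A*B)$$(i,j) = (\<Sum>k<n. A$$(i,k)*B$$(k,j))"
  using assms by (simp add: scalar_prod_def atLeast0LessThan)

lemma mult_diag_right:
  assumes "A \<in> carrier_mat n n" "D \<in> carrier_mat n n" "i < n" "j < n" "diagonal_mat D"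
  shows "(A*D)$$(i,j) = A$$(i,j)*D$$(j,j)"
proof -
  have "(A*D)$$(i,j) = (\<Sum>k<n. if k = j then A$$(i,j)*D$$(j,j) else 0)"
    unfolding mult_entry[OF assms(1-4)]
    by (rule sum.cong) (use assms in \<open>auto simp: diagonal_mat_def\<close>)
  then show ?thesis using assms by simp
qed

lemma mult_diag_left:
  assumes "A \<in> carrier_mat n n" "D \<in> carrier_mat n n" "i < n" "j < n" "diagonal_mat D"
  shows "(D*A)$$(i,j) = D$$(i,i)*A$$(i,j)"
proof -
  have "(D*A)$$(i,j) = (\<Sum>k<n. if k = i then D$$(i,i)*A$$(i,j) else 0)"
    unfolding mult_entry[OF assms(2,1,3,4)]
    by (rule sum.cong) (use assms in \<open>auto simp: diagonal_mat_def\<close>)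
  then show ?thesis using assms by simp
qed

lemma mult_diag_trans_left:
  assumes "A \<in> carrier_mat n n" "D \<in> carrier_mat n n" "i < n" "j < n" "diagonal_mat D"
  shows "(transpose_mat D*A)$$(i,j) = D$$(i,i)*A$$(i,j)"
proof -
  have "diagonal_mat (transpose_mat D)" using assms by (auto simp: diagonal_mat_def)
  from mult_diag_left[OF assms(1) _ assms(3,4) this] assms show ?thesis by simp
qed

lemma inv_upper:
  fixes P Q :: "'a::field mat"
  assumes P: "P \<in> carrier_mat n n" and Q: "Q \<in> carrier_mat n n" and ut: "upper_triangular P"
    and nz: "\<And>i. i < n \<Longrightarrow> P$$(i,i) \<noteq> 0" and QP: "Q * P = 1\<^sub>m n"
  shows "upper_triangular Q"
proof -
  have "\<forall>i. j < i \<longrightarrow> i < n \<longrightarrow> Q$$(i,j) = 0" for j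
  proof (induction j rule: less_induct)
    case (less j)
    show ?case
    proof (intro allI impI)
      fix i assume ji: "j < i" and i: "i < n"
      have jn: "j < n" using ji i by simp
      have "0 = (Q*P)$$(i,j)" using QP ji i by simp
      also have "\<dots> = (\<Sum>k<n. if k = j then Q$$(i,j)*P$$(j,j) else 0)"
        unfolding mult_entry[OF Q P i jn] using ji i
      proof (intro sum.cong refl)
        fix k assume k: "k \<in> {..<n}"
        show "Q $$ (i, k) * P $$ (k, j) = (if k = j then Q $$ (i, j) * P $$ (j, j) else 0)"
        proof (cases "k < j")
          case True then show ?thesis using less.IH[of k] ji i by auto
        next
          case False
          then show ?thesis using ut k P by (auto simp: upper_triangular_def)
        qed
      qed
      also have "\<dots> = Q$$(i,j)*P$$(j,j)" using ji i by simp
      finally show "Q$$(i,j) = 0" using nz[of j] ji i by simp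
    qed
  qed
  then show ?thesis using Q by (auto simp: upper_triangular_def)
qed

lemma upper_inverse_exists:
  fixes P :: "'a::field mat"
  assumes P: "P \<in> carrier_mat n n" and ut: "upper_triangular P"
    and one: "\<And>i. i < n \<Longrightarrow> P$$(i,i) = 1"
  shows "\<exists>Q \<in> carrier_mat n n. P * Q = 1\<^sub>m n \<and> Q * P = 1\<^sub>m n \<and> upper_triangular Q"
proof -
  have "diag_mat P = map (\<lambda>i. 1) [0..<n]" using P one unfolding diag_mat_def
    by (intro map_cong) auto
  then have "det P = 1" using det_upper_triangular[OF ut P] by (simp add: map_replicate_const)
  then have "P \<in> Units (ring_mat TYPE('a) n undefined)" using det_non_zero_imp_unit[OF P] by simp
  then obtain Q where Q: "Q \<in> carrier_mat n n" "P * Q = 1\<^sub>m n" "Q * P = 1\<^sub>m n"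
    unfolding Units_def ring_mat_def by auto
  moreover have "upper_triangular Q" using inv_upper[OF P Q(1) ut _ Q(3)] one by simp
  ultimately show ?thesis by blast
qed

lemma hess_left:
  fixes Q M :: "'a::field mat"
  assumes Q: "Q \<in> carrier_mat n n" and M: "M \<in> carrier_mat n n" and ut: "upper_triangular Q"
    and h0: "\<forall>k<n. \<forall>l<n. l + 1 < k \<longrightarrow> M$$(k,l) = 0"
  shows "\<And>i j. i < n \<Longrightarrow> j < n \<Longrightarrow> j + 1 < i \<Longrightarrow> (Q*M)$$(i,j) = 0"
    and "\<And>j. j + 1 < n \<Longrightarrow> (Q*M)$$(j+1,j) = Q$$(j+1,j+1) * M$$(j+1,j)"
proof -
  note h = h0[rule_format]
  fix i j assume i: "i < n" and j: "j < n" and ij: "j + 1 < i"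
  have "(Q*M)$$(i,j) = (\<Sum>k<n. 0)" unfolding mult_entry[OF Q M i j]
  proof (intro sum.cong refl)
    fix k assume k: "k \<in> {..<n}"
    show "Q$$(i,k) * M$$(k,j) = 0"
    proof (cases "k < i")
      case True then show ?thesis using ut i Q by (auto simp: upper_triangular_def)
    next
      case False then show ?thesis using h[of k j] k j ij by auto
    qed
  qed
  then show "(Q*M)$$(i,j) = 0" by simp
next
  note h = h0[rule_format]
  fix j assume j: "j + 1 < n"
  have jn: "j < n" using j by simp
  have "(Q*M)$$(j+1,j) = (\<Sum>k<n. if k = j+1 then Q$$(j+1,j+1) * M$$(j+1,j) else 0)"
    unfolding mult_entry[OF Q M j jn] using j
  proof (intro sum.cong refl)
    fix k assume k: "k \<in> {..<n}"
    show "Q$$(j+1,k) * M$$(k,j) = (if k = j+1 then Q$$(j+1,j+1) * M$$(j+1,j) else 0)"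
    proof (cases "k < j+1")
      case True then show ?thesis using ut j Q by (auto simp: upper_triangular_def)
    next
      case False then show ?thesis using h[of k j] k j by auto
    qed
  qed
  then show "(Q*M)$$(j+1,j) = Q$$(j+1,j+1) * M$$(j+1,j)" using j by simp
qed

lemma hess_right:
  fixes P M :: "'a::field mat"
  assumes M: "M \<in> carrier_mat n n" and P: "P \<in> carrier_mat n n" and ut: "upper_triangular P"
    and h0: "\<forall>k<n. \<forall>l<n. l + 1 < k \<longrightarrow> M$$(k,l) = 0"
  shows "\<And>i j. i < n \<Longrightarrow> j < n \<Longrightarrow> j + 1 < i \<Longrightarrow> (M*P)$$(i,j) = 0"
    and "\<And>j. j + 1 < n \<Longrightarrow> (M*P)$$(j+1,j) = M$$(j+1,j) * P$$(j,j)"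
proof -
  note h = h0[rule_format]
  fix i j assume i: "i < n" and j: "j < n" and ij: "j + 1 < i"
  have "(M*P)$$(i,j) = (\<Sum>k<n. 0)" unfolding mult_entry[OF M P i j]
  proof (intro sum.cong refl)
    fix k assume k: "k \<in> {..<n}"
    show "M$$(i,k) * P$$(k,j) = 0"
    proof (cases "j < k")
      case True then show ?thesis using ut k P by (auto simp: upper_triangular_def)
    next
      case False then show ?thesis using h[of i k] k i ij by auto
    qed
  qed
  then show "(M*P)$$(i,j) = 0" by simp
next
  note h = h0[rule_format]
  fix j assume j: "j + 1 < n"
  have jn: "j < n" using j by simp
  have "(M*P)$$(j+1,j) = (\<Sum>k<n. if k = j then M$$(j+1,j) * P$$(j,j) else 0)"
    unfolding mult_entry[OF M P j jn] using j
  proof (intro sum.cong refl)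
    fix k assume k: "k \<in> {..<n}"
    show "M$$(j+1,k) * P$$(k,j) = (if k = j then M$$(j+1,j) * P$$(j,j) else 0)"
    proof (cases "j < k")
      case True then show ?thesis using ut k P by (auto simp: upper_triangular_def)
    next
      case False then show ?thesis using h[of "j+1" k] k j by auto
    qed
  qed
  then show "(M*P)$$(j+1,j) = M$$(j+1,j) * P$$(j,j)" using j by simp
qed

lemma diag_upper_mult:
  fixes P Q :: "'a::field mat"
  assumes Q: "Q \<in> carrier_mat n n" and P: "P \<in> carrier_mat n n"
    and uQ: "upper_triangular Q" and uP: "upper_triangular P" and i: "i < n"
  shows "(Q*P)$$(i,i) = Q$$(i,i) * P$$(i,i)"
proof -
  have "(Q*P)$$(i,i) = (\<Sum>k<n. if k = i then Q$$(i,i) * P$$(i,i) else 0)"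
    unfolding mult_entry[OF Q P i i]
  proof (intro sum.cong refl)
    fix k assume k: "k \<in> {..<n}"
    show "Q$$(i,k) * P$$(k,i) = (if k = i then Q$$(i,i) * P$$(i,i) else 0)"
      using uQ uP Q P k i by (cases "k < i"; cases "i < k") (auto simp: upper_triangular_def)
  qed
  then show ?thesis using i by simp
qed

lemma transpose_mult':
  fixes A B :: "'a::comm_semiring_0 mat"
  shows "dim_col A = dim_row B \<Longrightarrow> transpose_mat (A * B) = transpose_mat B * transpose_mat A"
  by (rule transpose_mult[of A "dim_row A" "dim_col A" B "dim_col B"]) auto

lemma cancel_l:
  fixes A B Z :: "'a::semiring_1 mat"
  assumes "A \<in> carrier_mat n n" "B \<in> carrier_mat n n" "A * B = 1\<^sub>m n" "dim_row Z = n"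
  shows "A * (B * Z) = Z"
proof -
  have Z: "Z \<in> carrier_mat n (dim_col Z)" using assms(4) by auto
  have "A * (B * Z) = (A * B) * Z" using assms(1,2) Z by simp
  also have "\<dots> = Z" using assms(3,4) by simp
  finally show ?thesis .
qed

lemma comm_l:
  fixes A B C D Z :: "'a::semiring_1 mat"
  assumes "A \<in> carrier_mat n n" "B \<in> carrier_mat n n" "C \<in> carrier_mat n n" "D \<in> carrier_mat n n"
   "A * B = C * D" "dim_row Z = n"
  shows "A * (B * Z) = C * (D * Z)"
proof -
  have Z: "Z \<in> carrier_mat n (dim_col Z)" using assms(6) by auto
  have "A * (B * Z) = (A * B) * Z" using assms(1,2) Z by simp
  also have "\<dots> = (C * D) * Z" using assms(5) by simp
  also have "\<dots> = C * (D * Z)" using assms(3,4) Z by simp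
  finally show ?thesis .
qed

lemma assoc_n:
  fixes A B C :: "'a::semiring_0 mat"
  shows "A \<in> carrier_mat n n \<Longrightarrow> B \<in> carrier_mat n n \<Longrightarrow> C \<in> carrier_mat n n \<Longrightarrow>
      (A * B) * C = A * (B * C)"
  by (rule assoc_mult_mat)

lemma tr_n:
  fixes A B :: "'a::comm_semiring_0 mat"
  shows "A \<in> carrier_mat n n \<Longrightarrow> B \<in> carrier_mat n n \<Longrightarrow>
      transpose_mat (A * B) = transpose_mat B * transpose_mat A"
  by (rule transpose_mult)

lemma half:
  fixes P Q X Y H Hi :: "'a::field mat"
  assumes P: "P \<in> carrier_mat n n" and Q: "Q \<in> carrier_mat n n"
    and X: "X \<in> carrier_mat n n" and Y: "Y \<in> carrier_mat n n"
    and H: "H \<in> carrier_mat n n" and Hi: "Hi \<in> carrier_mat n n"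
    and PQ: "P * Q = 1\<^sub>m n" and QP: "Q * P = 1\<^sub>m n" and HHi: "H * Hi = 1\<^sub>m n"
    and uP: "upper_triangular P" and uQ: "upper_triangular Q"
    and nzP: "\<And>i. i < n \<Longrightarrow> P$$(i,i) \<noteq> 0" and nzQ: "\<And>i. i < n \<Longrightarrow> Q$$(i,i) \<noteq> 0"
    and hX: "\<And>k l. k < n \<Longrightarrow> l < n \<Longrightarrow> X$$(k,l) \<noteq> 0 \<Longrightarrow> k = l \<or> k = l + 1"
    and sX: "\<And>l. l + 1 < n \<Longrightarrow> X$$(l+1,l) \<noteq> 0"
    and dY: "diagonal_mat (Q*Y*P)" and iY: "inj_on (\<lambda>i. (Q*Y*P)$$(i,i)) {..<n}"
    and cX: "transpose_mat X * H = H * X" and cY: "transpose_mat Y * H = H * Y"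
  shows "irred_tridiagonal_mat (Q*X*P)"
proof -
  define D where "D = Q*Y*P"
  define T where "T = Q*X*P"
  define G where "G = transpose_mat P * H * P"
  define K where "K = Q * Hi * transpose_mat Q"
  have D: "D \<in> carrier_mat n n" and T: "T \<in> carrier_mat n n" and G: "G \<in> carrier_mat n n"
    and K: "K \<in> carrier_mat n n"
    unfolding D_def T_def G_def K_def using P Q X Y H Hi by auto
  have Pt: "transpose_mat P \<in> carrier_mat n n" and Qt: "transpose_mat Q \<in> carrier_mat n n"
    and Xt: "transpose_mat X \<in> carrier_mat n n" and Yt: "transpose_mat Y \<in> carrier_mat n n"
    using P Q X Y by auto
  have QtPt: "transpose_mat Q * transpose_mat P = 1\<^sub>m n"
    using arg_cong[OF PQ, of transpose_mat] transpose_mult[OF P Q] by simp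
  have PtQt: "transpose_mat P * transpose_mat Q = 1\<^sub>m n"
    using arg_cong[OF QP, of transpose_mat] transpose_mult[OF Q P] by simp
  note c1 = cancel_l[OF P Q PQ] cancel_l[OF Q P QP] cancel_l[OF H Hi HHi]
     cancel_l[OF Qt Pt QtPt] cancel_l[OF Pt Qt PtQt]
  note c2 = comm_l[OF Xt H H X cX] comm_l[OF Yt H H Y cY]
  note tr = tr_n[of _ n] assoc_n[of _ n]
  have YP: "Y * P = P * D"
    unfolding D_def using P Q Y by (simp add: c1 tr)
  have GD: "G * D = transpose_mat D * G"
  proof -
    have "G * D = transpose_mat P * (H * (Y * P))"
      unfolding G_def using P H Y D Pt by (simp add: YP tr)
    also have "\<dots> = transpose_mat P * (transpose_mat Y * (H * P))"
      using P H Y by (simp add: c2 tr)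
    also have "\<dots> = transpose_mat (Y * P) * (H * P)"
      using P H Y by (simp add: tr)
    also have "\<dots> = transpose_mat D * G"
      unfolding YP G_def using P D H by (simp add: tr)
    finally show ?thesis .
  qed
  have Goff: "G$$(i,j) = 0" if "i < n" "j < n" "i \<noteq> j" for i j
  proof -
    have "G$$(i,j) * D$$(j,j) = D$$(i,i) * G$$(i,j)"
      using arg_cong[OF GD, of "\<lambda>M. M$$(i,j)"] mult_diag_right[OF G D that(1,2)]
        mult_diag_trans_left[OF G D that(1,2)] dY unfolding D_def by simp
    moreover have "D$$(i,i) \<noteq> D$$(j,j)" using iY that unfolding D_def inj_on_def by auto
    ultimately show ?thesis by (metis mult.commute mult_cancel_left)
  qed
  have dG: "diagonal_mat G" using Goff G by (auto simp: diagonal_mat_def)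
  have GK: "G * K = 1\<^sub>m n"
    unfolding G_def K_def using P Q H Hi by (simp add: c1 tr PtQt)
  have Gnz: "G$$(i,i) \<noteq> 0" if "i < n" for i
  proof
    assume "G$$(i,i) = 0"
    then have "(G*K)$$(i,i) = 0" using mult_diag_left[OF K G that that dG] by simp
    then show False using GK that by simp
  qed
  have GT: "G * T = transpose_mat T * G"
  proof -
    have "G * T = transpose_mat P * (H * (X * P))"
      unfolding G_def T_def using P Q H X by (simp add: c1 tr)
    also have "\<dots> = transpose_mat P * (transpose_mat X * (H * P))"
      using P H X by (simp add: c2 tr)
    also have "\<dots> = transpose_mat T * G"
      unfolding T_def G_def using P Q H X by (simp add: tr c1)
    finally show ?thesis .
  qed
  have Tsym: "G$$(i,i) * T$$(i,j) = T$$(j,i) * G$$(j,j)" if "i < n" "j < n" for i j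
    using arg_cong[OF GT, of "\<lambda>M. M$$(i,j)"] mult_diag_left[OF T G that dG]
       mult_diag_right[OF _ G that dG, of "transpose_mat T"] T that by simp
  have Tz: "T$$(i,j) = 0 \<longleftrightarrow> T$$(j,i) = 0" if "i < n" "j < n" for i j
    using Tsym[OF that] Gnz that by auto
  have hX': "\<forall>k<n. \<forall>l<n. l + 1 < k \<longrightarrow> X$$(k,l) = 0"
    using hX by fastforce
  have QX: "Q * X \<in> carrier_mat n n" using Q X by simp
  note h1 = hess_left[OF Q X uQ hX']
  have hQX: "\<forall>k<n. \<forall>l<n. l + 1 < k \<longrightarrow> (Q*X)$$(k,l) = 0"
    using h1(1) by blast
  note h2 = hess_right[OF QX P uP hQX]
  have Tlow: "T$$(i,j) = 0" if "i < n" "j < n" "j + 1 < i" for i j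
    unfolding T_def using h2(1)[OF that] .
  have Tsub: "T$$(j+1,j) \<noteq> 0" if "j + 1 < n" for j
    unfolding T_def using h2(2)[OF that] h1(2)[OF that] nzP nzQ sX that by simp
  show ?thesis unfolding T_def[symmetric] irred_tridiagonal_mat_def tridiagonal_mat_def
  proof (intro conjI allI impI)
    fix i j assume i: "i < dim_row T" and j: "j < dim_col T" and nz: "T$$(i,j) \<noteq> 0"
    have "\<not> j + 1 < i" using Tlow i j nz T by auto
    moreover have "\<not> i + 1 < j" using Tlow[of j i] Tz[of i j] i j nz T by auto
    ultimately show "i = j \<or> i = j + 1 \<or> j = i + 1" by auto
  next
    fix i assume "i + 1 < dim_row T" "i + 1 < dim_col T"
    then show "T$$(i+1,i) \<noteq> 0" "T$$(i,i+1) \<noteq> 0" using Tsub[of i] Tz[of "i+1" i] T by auto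
  qed
qed

lemma transfer:
  fixes P Q M S S' :: "'a::field mat"
  assumes P: "P \<in> carrier_mat n n" and Q: "Q \<in> carrier_mat n n" and M: "M \<in> carrier_mat n n"
    and S: "S \<in> carrier_mat n n" and S': "S' \<in> carrier_mat n n"
    and PQ: "P * Q = 1\<^sub>m n" and S'S: "S' * S = 1\<^sub>m n"
    and cm: "transpose_mat (Q*M*P) * S = S * (Q*M*P)"
  shows "P * S' * transpose_mat P * transpose_mat M * (transpose_mat Q * S * Q) = M"
proof -
  note tr = tr_n[of _ n] assoc_n[of _ n]
  have Pt: "transpose_mat P \<in> carrier_mat n n" and Qt: "transpose_mat Q \<in> carrier_mat n n"
    and Mt: "transpose_mat M \<in> carrier_mat n n" using P Q M by auto
  have QMP: "Q*M*P \<in> carrier_mat n n" using P Q M by auto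
  have "P * S' * transpose_mat P * transpose_mat M * (transpose_mat Q * S * Q)
     = P * (S' * ((transpose_mat (Q*M*P) * S) * Q))"
    using P Q M S S' Pt Qt Mt by (simp add: tr)
  also have "\<dots> = P * (S' * ((S * (Q*M*P)) * Q))" by (simp only: cm)
  also have "\<dots> = M"
    using P Q M S S' by (simp add: tr cancel_l[OF S' S S'S] cancel_l[OF P Q PQ] PQ)
  finally show ?thesis .
qed

lemma fwd:
  fixes P Q X Y :: "'a::field mat"
  assumes P: "P \<in> carrier_mat n n" and Q: "Q \<in> carrier_mat n n"
    and X: "X \<in> carrier_mat n n" and Y: "Y \<in> carrier_mat n n"
    and PQ: "P * Q = 1\<^sub>m n" and QP: "Q * P = 1\<^sub>m n"
    and irr: "irred_tridiagonal_mat (Q*X*P)" and dg: "diagonal_mat (Q*Y*P)"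
  shows "\<exists>H \<in> carrier_mat n n. \<exists>Hi \<in> carrier_mat n n. H * Hi = 1\<^sub>m n \<and> Hi * H = 1\<^sub>m n \<and>
     Hi * transpose_mat X * H = X \<and> Hi * transpose_mat Y * H = Y"
proof -
  note tr = tr_n[of _ n] assoc_n[of _ n]
  define T where "T = Q*X*P"
  define D where "D = Q*Y*P"
  have T: "T \<in> carrier_mat n n" and D: "D \<in> carrier_mat n n" unfolding T_def D_def using P Q X Y by auto
  define s where "s i = (\<Prod>k<i. T$$(k,k+1) / T$$(k+1,k))" for i
  have Tsub: "T$$(k+1,k) \<noteq> 0" "T$$(k,k+1) \<noteq> 0" if "k + 1 < n" for k
    using irr that T unfolding T_def[symmetric] irred_tridiagonal_mat_def by auto
  have Tz: "T$$(i,j) = 0" if "i < n" "j < n" "\<not> (i = j \<or> i = j + 1 \<or> j = i + 1)" for i j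
    using irr that T unfolding T_def[symmetric] irred_tridiagonal_mat_def tridiagonal_mat_def by auto
  have snz: "s i \<noteq> 0" if "i < n" for i
    unfolding s_def using Tsub that by (auto simp: prod_zero_iff)
  have sSuc: "s (Suc i) = s i * (T$$(i,i+1) / T$$(i+1,i))" for i
    unfolding s_def by simp
  define S where "S = mat n n (\<lambda>(i,j). if i = j then s i else 0)"
  define S' where "S' = mat n n (\<lambda>(i,j). if i = j then inverse (s i) else 0)"
  have S: "S \<in> carrier_mat n n" and S': "S' \<in> carrier_mat n n" unfolding S_def S'_def by auto
  have dS: "diagonal_mat S" and dS': "diagonal_mat S'" unfolding S_def S'_def diagonal_mat_def by auto
  have SS': "S * S' = 1\<^sub>m n"
  proof (rule eq_matI)
    fix i j assume "i < dim_row (1\<^sub>m n)" "j < dim_col (1\<^sub>m n)"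
    then have i: "i < n" and j: "j < n" by auto
    show "(S * S') $$ (i, j) = 1\<^sub>m n $$ (i, j)"
      unfolding mult_diag_right[OF S S' i j dS'] using i j snz[OF i] by (auto simp: S_def S'_def)
  qed (use S S' in auto)
  have S'S: "S' * S = 1\<^sub>m n"
  proof (rule eq_matI)
    fix i j assume "i < dim_row (1\<^sub>m n)" "j < dim_col (1\<^sub>m n)"
    then have i: "i < n" and j: "j < n" by auto
    show "(S' * S) $$ (i, j) = 1\<^sub>m n $$ (i, j)"
      unfolding mult_diag_right[OF S' S i j dS] using i j snz[OF i] by (auto simp: S_def S'_def)
  qed (use S S' in auto)
  have cT: "transpose_mat T * S = S * T"
  proof (rule eq_matI)
    fix i j assume i: "i < dim_row (S * T)" and j: "j < dim_col (S * T)"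
    then have i: "i < n" and j: "j < n" using S T by auto
    have "T$$(j,i) * s j = s i * T$$(i,j)"
    proof -
      consider "i = j" | "i = j + 1" | "j = i + 1" | "\<not> (i = j \<or> i = j + 1 \<or> j = i + 1)" by blast
      then show ?thesis
      proof cases
        case 2 then show ?thesis using sSuc[of j] Tsub[of j] i by (simp add: field_simps)
      next
        case 3 then show ?thesis using sSuc[of i] Tsub[of i] j by (simp add: field_simps)
      next
        case 4 then show ?thesis using Tz[OF i j] Tz[OF j i] by auto
      qed simp
    qed
    then show "(transpose_mat T * S) $$ (i, j) = (S * T) $$ (i, j)"
      unfolding mult_diag_right[OF _ S i j dS, of "transpose_mat T", OF transpose_carrier_mat[THEN iffD2, OF T]] mult_diag_left[OF T S i j dS]
      using T S i j by (simp add: S_def)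
  qed (use S T in auto)
  have cD: "transpose_mat D * S = S * D"
  proof (rule eq_matI)
    fix i j assume i: "i < dim_row (S * D)" and j: "j < dim_col (S * D)"
    then have i: "i < n" and j: "j < n" using S D by auto
    have "D$$(j,i) * s j = s i * D$$(i,j)"
      using dg i j D unfolding D_def[symmetric] diagonal_mat_def by (cases "i = j") auto
    then show "(transpose_mat D * S) $$ (i, j) = (S * D) $$ (i, j)"
      unfolding mult_diag_right[OF _ S i j dS, of "transpose_mat D", OF transpose_carrier_mat[THEN iffD2, OF D]] mult_diag_left[OF D S i j dS]
      using D S i j by (simp add: S_def)
  qed (use S D in auto)
  have Pt: "transpose_mat P \<in> carrier_mat n n" and Qt: "transpose_mat Q \<in> carrier_mat n n"
    using P Q by auto
  have QtPt: "transpose_mat Q * transpose_mat P = 1\<^sub>m n"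
    using arg_cong[OF PQ, of transpose_mat] transpose_mult[OF P Q] by simp
  have PtQt: "transpose_mat P * transpose_mat Q = 1\<^sub>m n"
    using arg_cong[OF QP, of transpose_mat] transpose_mult[OF Q P] by simp
  show ?thesis
  proof (intro bexI conjI)
    show "transpose_mat Q * S * Q * (P * S' * transpose_mat P) = 1\<^sub>m n"
      using P Q S S' Pt Qt by (simp add: tr cancel_l[OF Q P QP] cancel_l[OF S S' SS'] QtPt)
    show "P * S' * transpose_mat P * (transpose_mat Q * S * Q) = 1\<^sub>m n"
      using P Q S S' Pt Qt by (simp add: tr cancel_l[OF Pt Qt PtQt] cancel_l[OF S' S S'S] PQ)
    show "P * S' * transpose_mat P * transpose_mat X * (transpose_mat Q * S * Q) = X"
      by (rule transfer[OF P Q X S S' PQ S'S]) (use cT in \<open>simp add: T_def\<close>)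
    show "P * S' * transpose_mat P * transpose_mat Y * (transpose_mat Q * S * Q) = Y"
      by (rule transfer[OF P Q Y S S' PQ S'S]) (use cD in \<open>simp add: D_def\<close>)
  qed (use P Q S S' in auto)
qed


definition dgm :: "nat \<Rightarrow> (nat \<Rightarrow> 'a::zero) \<Rightarrow> 'a mat" where
  "dgm n f = mat n n (\<lambda>(i,j). if i = j then f i else 0)"

definition Pst :: "nat \<Rightarrow> (nat \<Rightarrow> 'a::field) \<Rightarrow> (nat \<Rightarrow> 'a) \<Rightarrow> 'a mat" where
  "Pst d ths ph = mat (d+1) (d+1) (\<lambda>(i,j). if i \<le> j then \<Prod>k\<in>{i..<j}. ph (Suc k) / (ths j - ths k) else 0)"

definition Rm :: "nat \<Rightarrow> (nat \<Rightarrow> 'a::field) \<Rightarrow> 'a mat" where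
  "Rm d th = mat (d+1) (d+1) (\<lambda>(i,j). if j \<le> i then \<Prod>k\<in>{Suc j..i}. 1 / (th j - th k) else 0)"

lemma dgm_carrier: "dgm n f \<in> carrier_mat n n" unfolding dgm_def by auto
lemma dgm_diag: "diagonal_mat (dgm n f)" unfolding dgm_def diagonal_mat_def by auto

lemma eig_star:
  fixes ths ph :: "nat \<Rightarrow> 'a::field"
  assumes inj: "inj_on ths {0..d}"
  shows "Astar_mat d ths ph * Pst d ths ph = Pst d ths ph * dgm (d+1) ths"
proof -
  define n where "n = d + 1"
  define p where "p i j = (if i \<le> j then \<Prod>k\<in>{i..<j}. ph (Suc k) / (ths j - ths k) else 0)" for i j
  have Pe: "Pst d ths ph $$ (i,j) = p i j" if "i < n" "j < n" for i j
    using that unfolding Pst_def p_def n_def by simp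
  have As: "Astar_mat d ths ph \<in> carrier_mat n n" and Pc: "Pst d ths ph \<in> carrier_mat n n"
    and Dc: "dgm (d+1) ths \<in> carrier_mat n n"
    unfolding Astar_mat_def Pst_def n_def dgm_def by auto
  have prec: "p i j = ph (Suc i) / (ths j - ths i) * p (Suc i) j" if "i < j" for i j
    using that unfolding p_def by (simp add: prod.atLeast_Suc_lessThan)
  show ?thesis
  proof (rule eq_matI)
    fix i j assume "i < dim_row (Pst d ths ph * dgm (d + 1) ths)" "j < dim_col (Pst d ths ph * dgm (d + 1) ths)"
    then have i: "i < n" and j: "j < n" using Pc Dc by auto
    have "(Astar_mat d ths ph * Pst d ths ph) $$ (i,j)
        = (\<Sum>k<n. (if k = i then ths i * p i j else 0) + (if k = Suc i then ph (Suc i) * p (Suc i) j else 0))"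
      unfolding mult_entry[OF As Pc i j]
    proof (intro sum.cong refl)
      fix k assume k: "k \<in> {..<n}"
      show "Astar_mat d ths ph $$ (i, k) * Pst d ths ph $$ (k, j) =
         (if k = i then ths i * p i j else 0) + (if k = Suc i then ph (Suc i) * p (Suc i) j else 0)"
        using k i j Pe[of k j] unfolding Astar_mat_def n_def by auto
    qed
    also have "\<dots> = ths i * p i j + (if Suc i < n then ph (Suc i) * p (Suc i) j else 0)"
      using i by (simp add: sum.distrib)
    also have "\<dots> = p i j * ths j"
    proof -
      consider "i < j" | "i = j" | "j < i" by linarith
      then show ?thesis
      proof cases
        case 1
        have ne: "ths j - ths i \<noteq> 0" using inj_onD[OF inj, of j i] 1 i j unfolding n_def by fastforce
        have "Suc i < n" using 1 j by simp
        then show ?thesis using prec[OF 1] ne by (simp add: field_simps)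
      next
        case 2 then show ?thesis by (simp add: p_def)
      next
        case 3 then show ?thesis by (simp add: p_def)
      qed
    qed
    finally show "(Astar_mat d ths ph * Pst d ths ph) $$ (i,j) = (Pst d ths ph * dgm (d + 1) ths) $$ (i,j)"
      unfolding mult_diag_right[OF Pc Dc i j dgm_diag] using Pe[OF i j] i j
      by (simp add: dgm_def n_def)
  qed (use As Pc Dc in auto)
qed

lemma eig_A:
  fixes th :: "nat \<Rightarrow> 'a::field"
  assumes inj: "inj_on th {0..d}"
  shows "A_mat d th * Rm d th = Rm d th * dgm (d+1) th"
proof -
  define n where "n = d + 1"
  define r where "r i j = (if j \<le> i then \<Prod>k\<in>{Suc j..i}. 1 / (th j - th k) else 0)" for i j
  have Re: "Rm d th $$ (i,j) = r i j" if "i < n" "j < n" for i j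
    using that unfolding Rm_def r_def n_def by simp
  have Ac: "A_mat d th \<in> carrier_mat n n" and Rc: "Rm d th \<in> carrier_mat n n"
    and Dc: "dgm (d+1) th \<in> carrier_mat n n"
    unfolding A_mat_def Rm_def n_def dgm_def by auto
  have rrec: "r (Suc i) j = r i j / (th j - th (Suc i))" if "j \<le> i" for i j
    using that unfolding r_def by simp
  show ?thesis
  proof (rule eq_matI)
    fix i j assume "i < dim_row (Rm d th * dgm (d + 1) th)" "j < dim_col (Rm d th * dgm (d + 1) th)"
    then have i: "i < n" and j: "j < n" using Rc Dc by auto
    have "(A_mat d th * Rm d th) $$ (i,j)
        = (\<Sum>k<n. (if k = i then th i * r i j else 0) + (if Suc k = i then r (i - 1) j else 0))"
      unfolding mult_entry[OF Ac Rc i j]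
    proof (intro sum.cong refl)
      fix k assume k: "k \<in> {..<n}"
      show "A_mat d th $$ (i, k) * Rm d th $$ (k, j) =
         (if k = i then th i * r i j else 0) + (if Suc k = i then r (i - 1) j else 0)"
        using k i j Re[of k j] unfolding A_mat_def n_def by auto
    qed
    also have "\<dots> = th i * r i j + (if 0 < i then r (i - 1) j else 0)"
    proof (cases i)
      case 0 then show ?thesis using i by (simp add: sum.distrib)
    next
      case (Suc i')
      have "(\<Sum>k<n. (if Suc k = i then r (i - 1) j else 0)) = (\<Sum>k<n. (if k = i' then r i' j else 0))"
        using Suc by (intro sum.cong) auto
      then show ?thesis using i Suc by (simp add: sum.distrib)
    qed
    also have "\<dots> = r i j * th j"
    proof -
      consider "j < i" | "i = j" | "i < j" by linarith
      then show ?thesis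
      proof cases
        case 1
        then obtain i' where i': "i = Suc i'" "j \<le> i'" by (cases i) auto
        have ne: "th j - th i \<noteq> 0" using inj_onD[OF inj, of j i] 1 i j unfolding n_def by fastforce
        then show ?thesis using rrec[OF i'(2)] i' by (simp add: field_simps)
      next
        case 2 then show ?thesis by (auto simp: r_def)
      next
        case 3 then show ?thesis by (simp add: r_def)
      qed
    qed
    finally show "(A_mat d th * Rm d th) $$ (i,j) = (Rm d th * dgm (d + 1) th) $$ (i,j)"
      unfolding mult_diag_right[OF Rc Dc i j dgm_diag] using Re[OF i j] i j
      by (simp add: dgm_def n_def)
  qed (use Ac Rc Dc in auto)
qed


lemma irred_transpose:
  assumes "irred_tridiagonal_mat (M :: 'a::zero mat)"
  shows "irred_tridiagonal_mat (transpose_mat M)"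
proof -
  have t: "\<And>i j. i < dim_row M \<Longrightarrow> j < dim_col M \<Longrightarrow> M $$ (i,j) \<noteq> 0 \<Longrightarrow> i = j \<or> i = j + 1 \<or> j = i + 1"
    and s: "\<And>i. i + 1 < dim_row M \<Longrightarrow> i + 1 < dim_col M \<Longrightarrow> M $$ (i+1,i) \<noteq> 0 \<and> M $$ (i,i+1) \<noteq> 0"
    using assms unfolding irred_tridiagonal_mat_def tridiagonal_mat_def by auto
  show ?thesis unfolding irred_tridiagonal_mat_def tridiagonal_mat_def
  proof (intro conjI allI impI)
    fix i j assume "i < dim_row (transpose_mat M)" "j < dim_col (transpose_mat M)"
      "transpose_mat M $$ (i, j) \<noteq> 0"
    then show "i = j \<or> i = j + 1 \<or> j = i + 1" using t[of j i] by auto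
  next
    fix i assume "i + 1 < dim_row (transpose_mat M)" "i + 1 < dim_col (transpose_mat M)"
    then show "transpose_mat M $$ (i + 1, i) \<noteq> 0"
      using s[of i] by auto
  next
    fix i assume "i + 1 < dim_row (transpose_mat M)" "i + 1 < dim_col (transpose_mat M)"
    then show "transpose_mat M $$ (i, i + 1) \<noteq> 0"
      using s[of i] by auto
  qed
qed

lemma dgm_transpose: "transpose_mat (dgm n f) = dgm n f"
  by (rule eq_matI) (auto simp: dgm_def)

lemma dgm_inj:
  fixes f :: "nat \<Rightarrow> 'a::field"
  assumes "inj_on f {0..d}"
  shows "inj_on (\<lambda>i. dgm (d+1) f $$ (i,i)) {..<d+1}"
proof -
  have "{..<d+1} = {0..d}" by auto
  then show ?thesis using assms unfolding inj_on_def dgm_def by auto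
qed

theorem theorem6p4:
  fixes d :: nat and th ths ph :: "nat \<Rightarrow> 'a::field"
  assumes "inj_on th {0..d}"
    and "inj_on ths {0..d}"
    and "\<And>i. 1 \<le> i \<Longrightarrow> i \<le> d \<Longrightarrow> ph i \<noteq> 0"
  shows "Leonard_pair (d+1) (A_mat d th) (Astar_mat d ths ph) \<longleftrightarrow>
    (\<exists>H \<in> carrier_mat (d+1) (d+1). \<exists>Hi \<in> carrier_mat (d+1) (d+1).
        H * Hi = 1\<^sub>m (d+1) \<and> Hi * H = 1\<^sub>m (d+1) \<and>
        Hi * transpose_mat (A_mat d th) * H = A_mat d th \<and>
        Hi * transpose_mat (Astar_mat d ths ph) * H = Astar_mat d ths ph)"
proof -
  define n where "n = d + 1"
  define A where "A = A_mat d th"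
  define As where "As = Astar_mat d ths ph"
  have A: "A \<in> carrier_mat n n" and As: "As \<in> carrier_mat n n"
    unfolding A_def As_def A_mat_def Astar_mat_def n_def by auto
  note tr = tr_n[of _ n] assoc_n[of _ n]
  have "Leonard_pair n A As \<longleftrightarrow>
    (\<exists>H \<in> carrier_mat n n. \<exists>Hi \<in> carrier_mat n n.
        H * Hi = 1\<^sub>m n \<and> Hi * H = 1\<^sub>m n \<and>
        Hi * transpose_mat A * H = A \<and> Hi * transpose_mat As * H = As)"
  proof
    assume "Leonard_pair n A As"
    then obtain P Q where P: "P \<in> carrier_mat n n" and Q: "Q \<in> carrier_mat n n"
      and PQ: "P * Q = 1\<^sub>m n" and QP: "Q * P = 1\<^sub>m n"
      and irr: "irred_tridiagonal_mat (Q * A * P)" and dg: "diagonal_mat (Q * As * P)"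
      unfolding Leonard_pair_def by blast
    show "\<exists>H \<in> carrier_mat n n. \<exists>Hi \<in> carrier_mat n n.
        H * Hi = 1\<^sub>m n \<and> Hi * H = 1\<^sub>m n \<and>
        Hi * transpose_mat A * H = A \<and> Hi * transpose_mat As * H = As"
      by (rule fwd[OF P Q A As PQ QP irr dg])
  next
    assume "\<exists>H \<in> carrier_mat n n. \<exists>Hi \<in> carrier_mat n n.
        H * Hi = 1\<^sub>m n \<and> Hi * H = 1\<^sub>m n \<and>
        Hi * transpose_mat A * H = A \<and> Hi * transpose_mat As * H = As"
    then obtain H Hi where H: "H \<in> carrier_mat n n" and Hi: "Hi \<in> carrier_mat n n"
      and HHi: "H * Hi = 1\<^sub>m n" and HiH: "Hi * H = 1\<^sub>m n"
      and eA: "Hi * transpose_mat A * H = A" and eAs: "Hi * transpose_mat As * H = As" by blast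
    have At: "transpose_mat A \<in> carrier_mat n n" and Ast: "transpose_mat As \<in> carrier_mat n n"
      using A As by auto
    have cA: "transpose_mat A * H = H * A"
    proof -
      have "transpose_mat A * H = H * (Hi * transpose_mat A * H)"
        using A H Hi At by (simp add: tr cancel_l[OF H Hi HHi])
      then show ?thesis using eA by simp
    qed
    have cAs: "transpose_mat As * H = H * As"
    proof -
      have "transpose_mat As * H = H * (Hi * transpose_mat As * H)"
        using As H Hi Ast by (simp add: tr cancel_l[OF H Hi HHi])
      then show ?thesis using eAs by simp
    qed
    have cA': "transpose_mat (transpose_mat A) * Hi = Hi * transpose_mat A"
    proof -
      have "Hi * transpose_mat A = (Hi * transpose_mat A * H) * Hi"
        using A H Hi At by (simp add: tr HHi)
      then show ?thesis using eA by simp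
    qed
    have cAs': "transpose_mat (transpose_mat As) * Hi = Hi * transpose_mat As"
    proof -
      have "Hi * transpose_mat As = (Hi * transpose_mat As * H) * Hi"
        using As H Hi Ast by (simp add: tr HHi)
      then show ?thesis using eAs by simp
    qed
    have hA: "\<And>k l. k < n \<Longrightarrow> l < n \<Longrightarrow> A$$(k,l) \<noteq> 0 \<Longrightarrow> k = l \<or> k = l + 1"
      unfolding A_def A_mat_def n_def by (auto split: if_splits)
    have sA: "\<And>l. l + 1 < n \<Longrightarrow> A$$(l+1,l) \<noteq> 0"
      unfolding A_def A_mat_def n_def by auto
    have hAs: "\<And>k l. k < n \<Longrightarrow> l < n \<Longrightarrow> transpose_mat As $$(k,l) \<noteq> 0 \<Longrightarrow> k = l \<or> k = l + 1"
      unfolding As_def Astar_mat_def n_def by (auto split: if_splits)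
    have sAs: "\<And>l. l + 1 < n \<Longrightarrow> transpose_mat As $$(l+1,l) \<noteq> 0"
      unfolding As_def Astar_mat_def n_def using assms(3) by auto
    define P where "P = Pst d ths ph"
    define D where "D = dgm n ths"
    have P: "P \<in> carrier_mat n n" unfolding P_def Pst_def n_def by auto
    have D: "D \<in> carrier_mat n n" unfolding D_def by (rule dgm_carrier)
    have uP: "upper_triangular P" unfolding P_def Pst_def by auto
    have P1: "\<And>i. i < n \<Longrightarrow> P$$(i,i) = 1" unfolding P_def Pst_def n_def by auto
    obtain Q where Q: "Q \<in> carrier_mat n n" and PQ: "P * Q = 1\<^sub>m n" and QP: "Q * P = 1\<^sub>m n"
      and uQ: "upper_triangular Q"
      using upper_inverse_exists[OF P uP P1] by blast
    have nzQ: "Q$$(i,i) \<noteq> 0" if "i < n" for i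
      using diag_upper_mult[OF Q P uQ uP that] QP P1[OF that] that by simp
    have eP: "As * P = P * D" unfolding As_def P_def D_def n_def by (rule eig_star[OF assms(2)])
    have QAsP: "Q * As * P = D"
    proof -
      have "Q * As * P = Q * (P * D)" using Q As P by (simp add: tr eP[symmetric])
      also have "\<dots> = D" using Q P D by (simp add: cancel_l[OF Q P QP])
      finally show ?thesis .
    qed
    have irr1: "irred_tridiagonal_mat (Q * A * P)"
      by (rule half[OF P Q A As H Hi PQ QP HHi uP uQ _ nzQ hA sA])
        (use P1 QAsP dgm_inj[OF assms(2)] cA cAs in \<open>auto simp: D_def dgm_diag n_def\<close>)
    have part1: "\<exists>P \<in> carrier_mat n n. \<exists>Q \<in> carrier_mat n n. P * Q = 1\<^sub>m n \<and> Q * P = 1\<^sub>m n \<and>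
        irred_tridiagonal_mat (Q * A * P) \<and> diagonal_mat (Q * As * P)"
    proof -
      have "diagonal_mat (Q * As * P)" unfolding QAsP D_def by (rule dgm_diag)
      then show ?thesis using P Q PQ QP irr1 by blast
    qed
    define R where "R = Rm d th"
    define D' where "D' = dgm n th"
    have R: "R \<in> carrier_mat n n" unfolding R_def Rm_def n_def by auto
    have Rt: "transpose_mat R \<in> carrier_mat n n" using R by auto
    have D': "D' \<in> carrier_mat n n" unfolding D'_def by (rule dgm_carrier)
    have uR: "upper_triangular (transpose_mat R)" unfolding R_def Rm_def by auto
    have R1: "\<And>i. i < n \<Longrightarrow> transpose_mat R $$(i,i) = 1" unfolding R_def Rm_def n_def by auto
    obtain Q0 where Q0: "Q0 \<in> carrier_mat n n" and RQ: "transpose_mat R * Q0 = 1\<^sub>m n"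
      and QR: "Q0 * transpose_mat R = 1\<^sub>m n" and uQ0: "upper_triangular Q0"
      using upper_inverse_exists[OF Rt uR R1] by blast
    have nzQ0: "Q0$$(i,i) \<noteq> 0" if "i < n" for i
      using diag_upper_mult[OF Rt Q0 uR uQ0 that] RQ R1[OF that] that by simp
    have eR: "A * R = R * D'" unfolding A_def R_def D'_def n_def by (rule eig_A[OF assms(1)])
    have RAQ: "transpose_mat R * transpose_mat A * Q0 = D'"
    proof -
      have "transpose_mat R * transpose_mat A = transpose_mat (A * R)" using A R by (simp add: tr)
      also have "\<dots> = D' * transpose_mat R" using R D' by (simp add: eR tr D'_def dgm_transpose)
      finally have "transpose_mat R * transpose_mat A * Q0 = D' * transpose_mat R * Q0" by simp
      also have "\<dots> = D'" using D' Rt Q0 by (simp add: tr RQ)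
      finally show ?thesis .
    qed
    have irr2: "irred_tridiagonal_mat (transpose_mat R * transpose_mat As * Q0)"
      by (rule half[OF Q0 Rt Ast At Hi H QR RQ HiH uQ0 uR nzQ0 _ hAs sAs])
        (use R1 RAQ dgm_inj[OF assms(1)] cA' cAs' in \<open>auto simp: D'_def dgm_diag n_def\<close>)
    have Q0t: "transpose_mat Q0 \<in> carrier_mat n n" using Q0 by auto
    have RQ0t: "R * transpose_mat Q0 = 1\<^sub>m n"
      using arg_cong[OF QR, of transpose_mat] Q0 R by (simp add: tr)
    have Q0tR: "transpose_mat Q0 * R = 1\<^sub>m n"
      using arg_cong[OF RQ, of transpose_mat] Q0 R by (simp add: tr)
    have e2: "transpose_mat Q0 * As * R = transpose_mat (transpose_mat R * transpose_mat As * Q0)"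
      using Q0 R As Rt Ast by (simp add: tr)
    have e3: "transpose_mat Q0 * A * R = D'"
    proof -
      have "transpose_mat Q0 * A * R = transpose_mat Q0 * (R * D')" using Q0t A R by (simp add: tr eR[symmetric])
      also have "\<dots> = D'" using Q0t R D' by (simp add: cancel_l[OF Q0t R Q0tR])
      finally show ?thesis .
    qed
    have part2: "\<exists>P \<in> carrier_mat n n. \<exists>Q \<in> carrier_mat n n. P * Q = 1\<^sub>m n \<and> Q * P = 1\<^sub>m n \<and>
        irred_tridiagonal_mat (Q * As * P) \<and> diagonal_mat (Q * A * P)"
    proof -
      have i2: "irred_tridiagonal_mat (transpose_mat Q0 * As * R)"
        unfolding e2 by (rule irred_transpose[OF irr2])
      have d2: "diagonal_mat (transpose_mat Q0 * A * R)"
        unfolding e3 D'_def by (rule dgm_diag)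
      show ?thesis using R Q0t RQ0t Q0tR i2 d2 by blast
    qed
    show "Leonard_pair n A As" unfolding Leonard_pair_def using part1 part2 by blast
  qed
  then show ?thesis unfolding n_def A_def As_def .
qed

end
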